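(* For any $1\le s\le t$, the elements of $P(t,s)=P(t)P(t-1)\cdots P(s)$ are CD-rationals over $O((t-s+1)n\log n)$ bits, and every nonzero element of $P(t,s)$ is at least $n^{-O(n^2)}$.
   Context: For each $t\ge1$, $G_t$ is an undirected graph without self-loops on $\{1,\dots,n\}$ with degrees $d_i(t)$ and Laplacian $L_t$; $C_t=\mathrm{diag}(c_1(t),\dots,c_n(t))$ where each $c_i(t)$ is a rational encoded over $O(\log n)$ bits with $0<c_i(t)d_i(t)<1$; and $P(t)=I_n-C_tL_t$. A collection of numbers is a set of CD-rationals over $k$ bits if they can be written as $p_i/q$ with a common denominator $q$, all $p_i$ and $q$ being integers of $O(k)$ bits (the bound stated). $O(\cdot)$ hides absolute constants; $n$ is assumed large. *)

theory Defs
  imports Complex_Main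
begin

text \<open>Vertices are 0..<n (relabelling of 1..n). A time-varying graph is
  E :: nat => nat => nat => bool, with E t i j meaning {i,j} is an edge of G_t.
  Matrices of size n are functions nat => nat => real, read on indices < n.\<close>

definition deg :: "nat \<Rightarrow> (nat \<Rightarrow> nat \<Rightarrow> nat \<Rightarrow> bool) \<Rightarrow> nat \<Rightarrow> nat \<Rightarrow> nat" where
  "deg n E t i = card {j. j < n \<and> E t i j}"

definition is_graph_seq :: "nat \<Rightarrow> (nat \<Rightarrow> nat \<Rightarrow> nat \<Rightarrow> bool) \<Rightarrow> bool" where
  "is_graph_seq n E \<longleftrightarrow> (\<forall>t\<ge>1. \<forall>i<n. \<forall>j<n. (E t i j \<longleftrightarrow> E t j i) \<and> \<not> E t i i)"

definition laplacian :: "nat \<Rightarrow> (nat \<Rightarrow> nat \<Rightarrow> nat \<Rightarrow> bool) \<Rightarrow> nat \<Rightarrow> nat \<Rightarrow> nat \<Rightarrow> real" where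
  "laplacian n E t i j = (if i = j then real (deg n E t i) else if E t i j then -1 else 0)"

definition Pmat :: "nat \<Rightarrow> (nat \<Rightarrow> nat \<Rightarrow> nat \<Rightarrow> bool) \<Rightarrow> (nat \<Rightarrow> nat \<Rightarrow> real) \<Rightarrow> nat \<Rightarrow> nat \<Rightarrow> nat \<Rightarrow> real" where
  "Pmat n E c t i j = (if i = j then 1 else 0) - c t i * laplacian n E t i j"

definition mmul :: "nat \<Rightarrow> (nat \<Rightarrow> nat \<Rightarrow> real) \<Rightarrow> (nat \<Rightarrow> nat \<Rightarrow> real) \<Rightarrow> nat \<Rightarrow> nat \<Rightarrow> real" where
  "mmul n A B i j = (\<Sum>l<n. A i l * B l j)"

text \<open>Pprod n E c s k = P(s+k) P(s+k-1) ... P(s)\<close>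
fun Pprod :: "nat \<Rightarrow> (nat \<Rightarrow> nat \<Rightarrow> nat \<Rightarrow> bool) \<Rightarrow> (nat \<Rightarrow> nat \<Rightarrow> real) \<Rightarrow> nat \<Rightarrow> nat \<Rightarrow> nat \<Rightarrow> nat \<Rightarrow> real" where
  "Pprod n E c s 0 = Pmat n E c s"
| "Pprod n E c s (Suc k) = mmul n (Pmat n E c (s + Suc k)) (Pprod n E c s k)"

definition Pts :: "nat \<Rightarrow> (nat \<Rightarrow> nat \<Rightarrow> nat \<Rightarrow> bool) \<Rightarrow> (nat \<Rightarrow> nat \<Rightarrow> real) \<Rightarrow> nat \<Rightarrow> nat \<Rightarrow> nat \<Rightarrow> nat \<Rightarrow> real" where
  "Pts n E c t s = Pprod n E c s (t - s)"

definition int_bits :: "int \<Rightarrow> real \<Rightarrow> bool" where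
  "int_bits m b \<longleftrightarrow> \<bar>real_of_int m\<bar> < 2 powr b"

definition rat_bits :: "real \<Rightarrow> real \<Rightarrow> bool" where
  "rat_bits x b \<longleftrightarrow> (\<exists>p q. q \<noteq> 0 \<and> int_bits p b \<and> int_bits q b \<and> x = real_of_int p / real_of_int q)"

definition cd_rationals :: "nat \<Rightarrow> (nat \<Rightarrow> nat \<Rightarrow> real) \<Rightarrow> real \<Rightarrow> bool" where
  "cd_rationals n M b \<longleftrightarrow> (\<exists>q::int. \<exists>p::nat \<Rightarrow> nat \<Rightarrow> int. q \<noteq> 0 \<and> int_bits q b \<and>
      (\<forall>i<n. \<forall>j<n. int_bits (p i j) b \<and> M i j = real_of_int (p i j) / real_of_int q))"

end

theory Submission
  imports Defs
begin

lemma pos_frac_ge: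
  fixes a q :: int
  assumes "q \<noteq> 0" "x = real_of_int a / real_of_int q" "x > 0"
  shows "x \<ge> 1 / \<bar>real_of_int q\<bar>"
proof -
  have x: "x = \<bar>real_of_int a\<bar> / \<bar>real_of_int q\<bar>"
    using assms by (metis abs_divide abs_of_pos)
  have "a \<noteq> 0" using assms by auto
  hence "\<bar>real_of_int a\<bar> \<ge> 1" by linarith
  thus ?thesis using x assms(1) by (simp add: divide_right_mono)
qed

context
  fixes n :: nat and E and c and K :: real
  assumes n2: "n \<ge> 2" and K: "K > 0" and G: "is_graph_seq n E"
  and H: "\<forall>t\<ge>1. \<forall>i<n. rat_bits (c t i) (K * log 2 n) \<and> 0 < c t i * real (deg n E t i) \<and> c t i * real (deg n E t i) < 1"
begin

definition "B = real n powr K"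
definition "\<delta> = 1 / B"

lemma B_ge1: "B \<ge> 1"
  unfolding B_def using n2 K by (simp add: ge_one_powr_ge_zero)

lemma delta_pos: "\<delta> > 0" and delta_le1: "\<delta> \<le> 1"
  using B_ge1 unfolding \<delta>_def by auto

lemma two_pow: "2 powr (K * log 2 (real n)) = B"
proof -
  have "2 powr (K * log 2 (real n)) = (2 powr log 2 (real n)) powr K"
    by (simp add: powr_powr mult.commute)
  also have "\<dots> = B" unfolding B_def using n2 by simp
  finally show ?thesis .
qed

lemma crep:
  assumes "\<tau> \<ge> 1" "i < n"
  shows "\<exists>p q. q \<noteq> 0 \<and> \<bar>real_of_int p\<bar> < B \<and> \<bar>real_of_int q\<bar> < B \<and> c \<tau> i = real_of_int p / real_of_int q"
  using H assms unfolding rat_bits_def int_bits_def two_pow by blast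

lemma cpos: assumes "\<tau> \<ge> 1" "i < n" shows "c \<tau> i > 0" and "deg n E \<tau> i > 0"
  and "c \<tau> i * real (deg n E \<tau> i) < 1"
proof -
  have h: "0 < c \<tau> i * real (deg n E \<tau> i)" "c \<tau> i * real (deg n E \<tau> i) < 1"
    using H assms by auto
  thus "c \<tau> i > 0" "deg n E \<tau> i > 0" "c \<tau> i * real (deg n E \<tau> i) < 1"
    by (auto simp: zero_less_mult_iff)
qed

lemma c_ge: assumes "\<tau> \<ge> 1" "i < n" shows "c \<tau> i \<ge> \<delta>"
proof -
  obtain p q where pq: "q \<noteq> 0" "\<bar>real_of_int q\<bar> < B" "c \<tau> i = real_of_int p / real_of_int q"
    using crep[OF assms] by blast
  have "c \<tau> i \<ge> 1 / \<bar>real_of_int q\<bar>" using pos_frac_ge[OF pq(1) pq(3)] cpos[OF assms] by simp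
  moreover have "1 / \<bar>real_of_int q\<bar> \<ge> \<delta>" unfolding \<delta>_def using pq
    by (intro divide_left_mono) auto
  ultimately show ?thesis by simp
qed

lemma diag_ge: assumes "\<tau> \<ge> 1" "i < n" shows "1 - c \<tau> i * real (deg n E \<tau> i) \<ge> \<delta>"
proof -
  obtain p q where pq: "q \<noteq> 0" "\<bar>real_of_int q\<bar> < B" "c \<tau> i = real_of_int p / real_of_int q"
    using crep[OF assms] by blast
  have e: "1 - c \<tau> i * real (deg n E \<tau> i) = real_of_int (q - p * int (deg n E \<tau> i)) / real_of_int q"
    using pq by (simp add: field_simps)
  have "1 - c \<tau> i * real (deg n E \<tau> i) \<ge> 1 / \<bar>real_of_int q\<bar>"
    using pos_frac_ge[OF pq(1) e] cpos[OF assms] by simp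
  moreover have "1 / \<bar>real_of_int q\<bar> \<ge> \<delta>" unfolding \<delta>_def using pq
    by (intro divide_left_mono) auto
  ultimately show ?thesis by simp
qed

lemma Pmat_off: assumes "\<tau> \<ge> 1" "i < n" "l < n" "i \<noteq> l"
  shows "Pmat n E c \<tau> i l = (if E \<tau> i l then c \<tau> i else 0)"
  using assms unfolding Pmat_def laplacian_def by auto

lemma Pmat_diag: "Pmat n E c \<tau> i i = 1 - c \<tau> i * real (deg n E \<tau> i)"
  unfolding Pmat_def laplacian_def by auto

lemma Pmat_nonneg: assumes "\<tau> \<ge> 1" "i < n" "l < n" shows "Pmat n E c \<tau> i l \<ge> 0"
  using assms Pmat_off[OF assms] Pmat_diag cpos[OF assms(1,2)] by (cases "i = l") auto

lemma Pmat_ge: assumes "\<tau> \<ge> 1" "i < n" "l < n" "Pmat n E c \<tau> i l \<noteq> 0"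
  shows "Pmat n E c \<tau> i l \<ge> \<delta>"
  using assms Pmat_off[OF assms(1-3)] Pmat_diag diag_ge[OF assms(1,2)] c_ge[OF assms(1,2)]
  by (cases "i = l") (auto split: if_splits)

lemma Pmat_diag_pos: assumes "\<tau> \<ge> 1" "i < n" shows "Pmat n E c \<tau> i i > 0"
  using Pmat_diag cpos[OF assms] by simp

lemma Pmat_sym: assumes "\<tau> \<ge> 1" "i < n" "l < n" "Pmat n E c \<tau> i l \<noteq> 0"
  shows "Pmat n E c \<tau> l i \<noteq> 0"
proof (cases "i = l")
  case False
  have "E \<tau> i l" using assms Pmat_off[OF assms(1-3) False] by (auto split: if_splits)
  hence "E \<tau> l i" using G assms unfolding is_graph_seq_def by blast
  thus ?thesis using Pmat_off[OF assms(1) assms(3) assms(2)] False cpos[OF assms(1,3)] by auto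
qed (use assms in auto)

lemma Pmat_rowsum: assumes "\<tau> \<ge> 1" "i < n" shows "(\<Sum>l<n. Pmat n E c \<tau> i l) = 1"
proof -
  have nE: "\<not> E \<tau> i i" using G assms unfolding is_graph_seq_def by blast
  have "\<forall>l\<in>{..<n}. Pmat n E c \<tau> i l = (if i = l then 1 - c \<tau> i * real (deg n E \<tau> i) else 0)
      + (if E \<tau> i l then c \<tau> i else 0)"
    using nE unfolding Pmat_def laplacian_def by auto
  hence "(\<Sum>l<n. Pmat n E c \<tau> i l) = (\<Sum>l<n. (if i = l then 1 - c \<tau> i * real (deg n E \<tau> i) else 0))
      + (\<Sum>l<n. (if E \<tau> i l then c \<tau> i else 0))"
    by (simp add: sum.distrib)
  also have "\<dots> = (1 - c \<tau> i * real (deg n E \<tau> i)) + c \<tau> i * real (card {l\<in>{..<n}. E \<tau> i l})"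
    using assms by (simp add: sum.If_cases Int_def)
  also have "{l\<in>{..<n}. E \<tau> i l} = {j. j < n \<and> E \<tau> i j}" by auto
  finally show ?thesis unfolding deg_def by simp
qed

lemma prod_stoch:
  assumes "s \<ge> 1"
  shows "(\<forall>i<n. (\<Sum>l<n. Pprod n E c s k i l) = 1) \<and> (\<forall>i<n. \<forall>l<n. Pprod n E c s k i l \<ge> 0)"
proof (induction k)
  case 0
  then show ?case using Pmat_rowsum Pmat_nonneg assms by auto
next
  case (Suc k)
  let ?P = "Pmat n E c (s + Suc k)"
  let ?M = "Pprod n E c s k"
  have t: "s + Suc k \<ge> 1" by simp
  have "(\<Sum>j<n. mmul n ?P ?M i j) = 1" if "i < n" for i
  proof -
    have "(\<Sum>j<n. mmul n ?P ?M i j) = (\<Sum>l<n. ?P i l * (\<Sum>j<n. ?M l j))"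
      unfolding mmul_def sum_distrib_left by (rule sum.swap)
    also have "\<dots> = (\<Sum>l<n. ?P i l)" using Suc by simp
    finally show ?thesis using Pmat_rowsum[OF t that] by simp
  qed
  moreover have "mmul n ?P ?M i j \<ge> 0" if "i < n" "j < n" for i j
    unfolding mmul_def using Suc Pmat_nonneg[OF t that(1)] that by (intro sum_nonneg mult_nonneg_nonneg) auto
  ultimately show ?case by simp
qed

lemma prod_le1:
  assumes "s \<ge> 1" "i < n" "j < n"
  shows "Pprod n E c s k i j \<le> 1"
proof -
  have "Pprod n E c s k i j \<le> (\<Sum>l<n. Pprod n E c s k i l)"
    using prod_stoch[OF assms(1)] assms by (intro member_le_sum) auto
  thus ?thesis using prod_stoch[OF assms(1)] assms by simp
qed

lemma prod_lower:
  assumes "s \<ge> 1" "j < n"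
  shows "\<forall>i<n. Pprod n E c s k i j \<noteq> 0 \<longrightarrow>
           Pprod n E c s k i j \<ge> \<delta> ^ card {i. i < n \<and> Pprod n E c s k i j \<noteq> 0}"
proof (induction k)
  case 0
  show ?case
  proof (intro allI impI)
    fix i assume i: "i < n" "Pprod n E c s 0 i j \<noteq> 0"
    let ?S = "{i. i < n \<and> Pprod n E c s 0 i j \<noteq> 0}"
    have fin: "finite ?S" by auto
    have "i \<in> ?S" using i by auto
    hence "card ?S \<ge> 1" using fin by (metis One_nat_def Suc_leI card_gt_0_iff empty_iff)
    hence "\<delta> ^ card ?S \<le> \<delta> ^ 1" using delta_pos delta_le1 by (intro power_decreasing) auto
    moreover have "Pprod n E c s 0 i j \<ge> \<delta>" using Pmat_ge assms i by simp
    ultimately show "Pprod n E c s 0 i j \<ge> \<delta> ^ card ?S" by simp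
  qed
next
  case (Suc k)
  let ?P = "Pmat n E c (s + Suc k)"
  let ?x = "\<lambda>l. Pprod n E c s k l j"
  let ?y = "\<lambda>i. Pprod n E c s (Suc k) i j"
  define S where "S = {i. i < n \<and> ?x i \<noteq> 0}"
  define S' where "S' = {i. i < n \<and> ?y i \<noteq> 0}"
  define b where "b = \<delta> ^ card S"
  have t: "s + Suc k \<ge> 1" by simp
  have y: "?y i = (\<Sum>l<n. ?P i l * ?x l)" for i by (simp add: mmul_def)
  have xnn: "l < n \<Longrightarrow> ?x l \<ge> 0" for l using prod_stoch[OF assms(1)] assms by auto
  have xb: "l \<in> S \<Longrightarrow> ?x l \<ge> b" for l using Suc unfolding S_def b_def by auto
  have Pnn: "i < n \<Longrightarrow> l < n \<Longrightarrow> ?P i l \<ge> 0" for i l using Pmat_nonneg[OF t] by auto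
  have ylow: "?y i \<ge> ?P i l * ?x l" if "i < n" "l < n" for i l
  proof -
    have "?P i l * ?x l \<le> (\<Sum>l<n. ?P i l * ?x l)"
      using that Pnn xnn by (intro member_le_sum) auto
    thus ?thesis using y by simp
  qed
  have fS: "finite S" "S \<subseteq> {..<n}" unfolding S_def by auto
  have fS': "finite S'" "S' \<subseteq> {..<n}" unfolding S'_def by auto
  have sub: "S \<subseteq> S'"
  proof
    fix i assume "i \<in> S"
    hence i: "i < n" "?x i > 0" using xnn unfolding S_def by force+
    have "?y i \<ge> ?P i i * ?x i" using ylow i by simp
    moreover have "?P i i * ?x i > 0" using Pmat_diag_pos[OF t i(1)] i by simp
    ultimately show "i \<in> S'" using i unfolding S'_def by auto
  qed
  have ysplit: "?y i = (\<Sum>l\<in>S. ?P i l * ?x l)" for i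
  proof -
    have "(\<Sum>l<n. ?P i l * ?x l) = (\<Sum>l\<in>S. ?P i l * ?x l)"
      by (rule sum.mono_neutral_right) (auto simp: S_def)
    thus ?thesis using y by simp
  qed
  have yW: "?y i \<ge> (\<Sum>l\<in>S. ?P i l) * b" if "i < n" for i
  proof -
    have "(\<Sum>l\<in>S. ?P i l) * b = (\<Sum>l\<in>S. ?P i l * b)" by (simp add: sum_distrib_right)
    also have "\<dots> \<le> (\<Sum>l\<in>S. ?P i l * ?x l)"
      using fS that Pnn xb by (intro sum_mono mult_left_mono) auto
    finally show ?thesis using ysplit by simp
  qed
  have bpos: "b > 0" unfolding b_def using delta_pos by simp
  show ?case
  proof (intro allI impI)
    fix i assume i: "i < n" "?y i \<noteq> 0"
    show "?y i \<ge> \<delta> ^ card {i. i < n \<and> ?y i \<noteq> 0}"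
    proof (cases "S' = S")
      case True
      have iS: "i \<in> S" using i True unfolding S'_def by auto
      have W: "(\<Sum>l\<in>S. ?P i l) = 1"
      proof -
        have z: "\<forall>l\<in>{..<n} - S. ?P i l = 0"
        proof (rule ccontr)
          assume "\<not> ?thesis"
          then obtain l where l: "l < n" "l \<notin> S" "?P i l \<noteq> 0" by auto
          have "l \<noteq> i" using l iS by auto
          have "?P l i \<noteq> 0" using Pmat_sym[OF t i(1) l(1) l(3)] .
          hence "?P l i > 0" using Pnn[OF l(1) i(1)] by simp
          moreover have "?x i > 0" using iS xnn unfolding S_def by force
          ultimately have "?y l > 0" using ylow[OF l(1) i(1)] by (smt (verit) mult_pos_pos)
          hence "l \<in> S'" using l unfolding S'_def by auto
          thus False using True l by auto
        qed
        have "(\<Sum>l<n. ?P i l) = (\<Sum>l\<in>S. ?P i l)"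
          by (rule sum.mono_neutral_right) (use fS z in auto)
        thus ?thesis using Pmat_rowsum[OF t i(1)] by simp
      qed
      show ?thesis using yW[OF i(1)] W True unfolding S'_def b_def S_def by simp
    next
      case False
      hence "S \<subset> S'" using sub by auto
      hence "card S < card S'" using psubset_card_mono[OF fS'(1)] by blast
      hence cS: "card S' \<ge> Suc (card S)" by simp
      obtain l where l: "l \<in> S" "?P i l \<noteq> 0"
      proof -
        have "\<exists>l\<in>S. ?P i l \<noteq> 0"
        proof (rule ccontr)
          assume "\<not> ?thesis"
          hence "?y i = 0" using ysplit[of i] by simp
          thus False using i by simp
        qed
        thus ?thesis using that by blast
      qed
      have ln: "l < n" using l fS by auto
      have "(\<Sum>l\<in>S. ?P i l) \<ge> ?P i l"
        using fS l Pnn i(1) by (intro member_le_sum) auto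
      moreover have "?P i l \<ge> \<delta>" using Pmat_ge[OF t i(1) ln l(2)] .
      ultimately have "?y i \<ge> \<delta> * b" using yW[OF i(1)] bpos by (smt (verit) mult_right_mono)
      moreover have "\<delta> * b = \<delta> ^ Suc (card S)" unfolding b_def by simp
      moreover have "\<delta> ^ Suc (card S) \<ge> \<delta> ^ card S'" using cS delta_pos delta_le1 by (intro power_decreasing) auto
      ultimately show ?thesis unfolding S'_def by simp
    qed
  qed
qed

definition "Lint \<tau> i l = (if i = l then int (deg n E \<tau> i) else if E \<tau> i l then -1 else (0::int))"

lemma lap_int: "laplacian n E \<tau> i l = real_of_int (Lint \<tau> i l)"
  unfolding laplacian_def Lint_def by auto

lemma Pmat_den:
  assumes t: "\<tau> \<ge> 1"
  shows "\<exists>Q::int. Q \<noteq> 0 \<and> \<bar>real_of_int Q\<bar> \<le> B ^ n \<and>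
           (\<forall>i<n. \<forall>l<n. \<exists>a::int. Pmat n E c \<tau> i l = real_of_int a / real_of_int Q)"
proof -
  have "\<forall>i\<in>{..<n}. \<exists>pq::int\<times>int. snd pq \<noteq> 0 \<and> \<bar>real_of_int (snd pq)\<bar> < B \<and>
          c \<tau> i = real_of_int (fst pq) / real_of_int (snd pq)"
    using crep[OF t] by fastforce
  then obtain f where f: "\<forall>i\<in>{..<n}. snd (f i) \<noteq> 0 \<and> \<bar>real_of_int (snd (f i))\<bar> < B \<and>
          c \<tau> i = real_of_int (fst (f i)) / real_of_int (snd (f i))"
    by (metis bchoice)
  define qq where "qq i = snd (f i)" for i
  define pp where "pp i = fst (f i)" for i
  have f': "\<And>i. i < n \<Longrightarrow> qq i \<noteq> 0 \<and> \<bar>real_of_int (qq i)\<bar> < B \<and> c \<tau> i = real_of_int (pp i) / real_of_int (qq i)"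
    using f unfolding qq_def pp_def by auto
  define Q where "Q = (\<Prod>i<n. qq i)"
  have Q0: "Q \<noteq> 0" unfolding Q_def using f' by auto
  have "\<bar>real_of_int Q\<bar> = (\<Prod>i<n. \<bar>real_of_int (qq i)\<bar>)" unfolding Q_def by (simp add: abs_prod)
  also have "\<dots> \<le> (\<Prod>i<n. B)" using f' by (intro prod_mono) (auto simp: less_imp_le)
  finally have Qb: "\<bar>real_of_int Q\<bar> \<le> B ^ n" by simp
  have "\<exists>a::int. Pmat n E c \<tau> i l = real_of_int a / real_of_int Q" if i: "i < n" "l < n" for i l
  proof -
    define R where "R = (\<Prod>m\<in>{..<n} - {i}. qq m)"
    have R0: "R \<noteq> 0" unfolding R_def using f' by auto
    have QR: "Q = qq i * R" unfolding Q_def R_def using i by (simp add: prod.remove)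
    define num where "num = (if i = l then qq i else 0) - pp i * Lint \<tau> i l"
    have "Pmat n E c \<tau> i l = real_of_int num / real_of_int (qq i)"
      unfolding Pmat_def lap_int num_def using f'[OF i(1)] by (auto simp: field_simps)
    also have "\<dots> = real_of_int (num * R) / real_of_int Q"
      using R0 f'[OF i(1)] unfolding QR by simp
    finally show ?thesis by blast
  qed
  thus ?thesis using Q0 Qb by blast
qed

lemma prod_den:
  assumes s: "s \<ge> 1"
  shows "\<exists>q::int. q \<noteq> 0 \<and> \<bar>real_of_int q\<bar> \<le> B ^ (n * (k + 1)) \<and>
           (\<forall>i<n. \<forall>j<n. \<exists>a::int. Pprod n E c s k i j = real_of_int a / real_of_int q)"
proof (induction k)
  case 0
  then show ?case using Pmat_den[OF s] by simp
next
  case (Suc k)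
  have t: "s + Suc k \<ge> 1" by simp
  obtain Q where Q: "Q \<noteq> 0" "\<bar>real_of_int Q\<bar> \<le> B ^ n"
    "\<forall>i<n. \<forall>l<n. \<exists>a::int. Pmat n E c (s + Suc k) i l = real_of_int a / real_of_int Q"
    using Pmat_den[OF t] by blast
  obtain q where q: "q \<noteq> 0" "\<bar>real_of_int q\<bar> \<le> B ^ (n * (k + 1))"
    "\<forall>i<n. \<forall>j<n. \<exists>a::int. Pprod n E c s k i j = real_of_int a / real_of_int q"
    using Suc by blast
  have "\<forall>i l. \<exists>a::int. i < n \<longrightarrow> l < n \<longrightarrow> Pmat n E c (s + Suc k) i l = real_of_int a / real_of_int Q"
    using Q(3) by blast
  then obtain fa where fa: "\<And>i l. i < n \<Longrightarrow> l < n \<Longrightarrow> Pmat n E c (s + Suc k) i l = real_of_int (fa i l) / real_of_int Q"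
    by metis
  have "\<forall>i l. \<exists>a::int. i < n \<longrightarrow> l < n \<longrightarrow> Pprod n E c s k i l = real_of_int a / real_of_int q"
    using q(3) by blast
  then obtain fb where fb: "\<And>i l. i < n \<Longrightarrow> l < n \<Longrightarrow> Pprod n E c s k i l = real_of_int (fb i l) / real_of_int q"
    by metis
  have "\<exists>a::int. Pprod n E c s (Suc k) i j = real_of_int a / real_of_int (Q * q)" if "i < n" "j < n" for i j
  proof -
    have "Pprod n E c s (Suc k) i j = (\<Sum>l<n. real_of_int (fa i l) / real_of_int Q * (real_of_int (fb l j) / real_of_int q))"
      using that fa fb by (simp add: mmul_def)
    also have "\<dots> = (\<Sum>l<n. real_of_int (fa i l * fb l j) / real_of_int (Q * q))"
      by (intro sum.cong) auto
    also have "\<dots> = real_of_int (\<Sum>l<n. fa i l * fb l j) / real_of_int (Q * q)"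
      by (simp add: sum_divide_distrib)
    finally show ?thesis by blast
  qed
  moreover have "\<bar>real_of_int (Q * q)\<bar> \<le> B ^ (n * (Suc k + 1))"
  proof -
    have "\<bar>real_of_int (Q * q)\<bar> = \<bar>real_of_int Q\<bar> * \<bar>real_of_int q\<bar>" by (simp add: abs_mult)
    also have "\<dots> \<le> B ^ n * B ^ (n * (k + 1))"
      using Q(2) q(2) by (intro mult_mono) auto
    also have "\<dots> = B ^ (n * (Suc k + 1))" by (simp add: power_add[symmetric] algebra_simps)
    finally show ?thesis .
  qed
  ultimately show ?case using Q(1) q(1) by (intro exI[of _ "Q * q"]) auto
qed

lemma main_ctx:
  assumes st: "1 \<le> s" "s \<le> t"
  shows "cd_rationals n (Pts n E c t s) ((K + 1) * real (t - s + 1) * real n * log 2 n)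
        \<and> (\<forall>i<n. \<forall>j<n. Pts n E c t s i j \<noteq> 0 \<longrightarrow>
              Pts n E c t s i j \<ge> real n powr (- (K + 1) * real n ^ 2))"
proof
  define k where "k = t - s"
  define b where "b = (K + 1) * real (t - s + 1) * real n * log 2 n"
  have Pk: "Pts n E c t s = Pprod n E c s k" unfolding Pts_def k_def by simp
  have ln: "log 2 (real n) > 0" using n2 by simp
  have Bpow: "B ^ m = 2 powr (K * log 2 (real n) * real m)" for m
  proof -
    have "B ^ m = B powr real m" using B_ge1 by (simp add: powr_realpow)
    thus ?thesis unfolding two_pow[symmetric] by (simp add: powr_powr)
  qed
  have Bb: "B ^ (n * (k + 1)) < 2 powr b"
  proof -
    define x where "x = real n * real (t - s + 1) * log 2 (real n)"
    have xp: "x > 0" unfolding x_def using ln n2 by simp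
    have e1: "K * log 2 (real n) * real (n * (k + 1)) = K * x" unfolding x_def k_def by (simp only: of_nat_mult mult_ac)
    have e2: "b = (K + 1) * x" unfolding b_def x_def by simp
    have "K * x < (K + 1) * x" using xp by simp
    hence "K * log 2 (real n) * real (n * (k + 1)) < b" by (simp only: e1 e2)
    thus ?thesis unfolding Bpow by simp
  qed
  obtain q where q: "q \<noteq> 0" "\<bar>real_of_int q\<bar> \<le> B ^ (n * (k + 1))"
    "\<forall>i<n. \<forall>j<n. \<exists>a::int. Pprod n E c s k i j = real_of_int a / real_of_int q"
    using prod_den[OF st(1)] by blast
  have "\<forall>i j. \<exists>a::int. i < n \<longrightarrow> j < n \<longrightarrow> Pprod n E c s k i j = real_of_int a / real_of_int q"
    using q(3) by blast
  then obtain p where p: "\<And>i j. i < n \<Longrightarrow> j < n \<Longrightarrow> Pprod n E c s k i j = real_of_int (p i j) / real_of_int q"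
    by metis
  have "int_bits (p i j) b \<and> Pprod n E c s k i j = real_of_int (p i j) / real_of_int q" if "i < n" "j < n" for i j
  proof -
    have m01: "0 \<le> Pprod n E c s k i j" "Pprod n E c s k i j \<le> 1"
      using prod_stoch[OF st(1)] prod_le1[OF st(1) that] that by auto
    have "real_of_int (p i j) = Pprod n E c s k i j * real_of_int q" using p[OF that] q(1) by simp
    hence "\<bar>real_of_int (p i j)\<bar> = Pprod n E c s k i j * \<bar>real_of_int q\<bar>" using m01 by (simp add: abs_mult)
    also have "\<dots> \<le> \<bar>real_of_int q\<bar>" using m01 by (simp add: mult_left_le_one_le)
    finally show ?thesis using q(2) Bb p[OF that] unfolding int_bits_def by simp
  qed
  moreover have "int_bits q b" using q(2) Bb unfolding int_bits_def by simp
  ultimately show "cd_rationals n (Pts n E c t s) ((K + 1) * real (t - s + 1) * real n * log 2 n)"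
    unfolding cd_rationals_def Pk b_def[symmetric] using q(1) by blast
next
  define k where "k = t - s"
  have Pk: "Pts n E c t s = Pprod n E c s k" unfolding Pts_def k_def by simp
  show "\<forall>i<n. \<forall>j<n. Pts n E c t s i j \<noteq> 0 \<longrightarrow> Pts n E c t s i j \<ge> real n powr (- (K + 1) * real n ^ 2)"
  proof (intro allI impI)
    fix i j assume ij: "i < n" "j < n" "Pts n E c t s i j \<noteq> 0"
    let ?S = "{i. i < n \<and> Pprod n E c s k i j \<noteq> 0}"
    have "Pprod n E c s k i j \<ge> \<delta> ^ card ?S" using prod_lower[OF st(1) ij(2)] ij Pk by auto
    moreover have "card ?S \<le> n"
    proof -
      have "?S \<subseteq> {..<n}" by auto
      hence "card ?S \<le> card {..<n}" by (intro card_mono) auto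
      thus ?thesis by simp
    qed
    hence "\<delta> ^ card ?S \<ge> \<delta> ^ n" using delta_pos delta_le1 by (intro power_decreasing) auto
    moreover have "\<delta> ^ n = real n powr (- (K * real n))"
    proof -
      have "\<delta> ^ n = 1 / B ^ n" unfolding \<delta>_def by (simp add: power_one_over)
      moreover have "B ^ n = B powr real n" using B_ge1 by (simp add: powr_realpow)
      moreover have "B powr real n = real n powr (K * real n)" unfolding B_def by (simp add: powr_powr)
      ultimately have "\<delta> ^ n = inverse (real n powr (K * real n))" by (simp add: divide_inverse)
      thus ?thesis by (simp add: powr_minus)
    qed
    moreover have "real n powr (- (K + 1) * real n ^ 2) \<le> real n powr (- (K * real n))"
    proof (rule powr_mono)
      have n1: "real n \<ge> 1" using n2 by simp
      have "K * real n * 1 \<le> K * real n * real n" using K n1 by (intro mult_left_mono) auto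
      moreover have "K * real n * real n \<le> (K + 1) * real n * real n" using n1 by simp
      ultimately have "K * real n \<le> (K + 1) * real n * real n" by linarith
      moreover have "- (K + 1) * real n ^ 2 = - ((K + 1) * real n * real n)" by (simp add: power2_eq_square algebra_simps)
      ultimately show "- (K + 1) * real n ^ 2 \<le> - (K * real n)" by linarith
      show "1 \<le> real n" using n1 .
    qed
    ultimately show "Pts n E c t s i j \<ge> real n powr (- (K + 1) * real n ^ 2)" using Pk by simp
  qed
qed

end

theorem lemma3p1:
  "\<forall>K>0. \<exists>C>0. \<exists>N0::nat. \<forall>n\<ge>N0. \<forall>E c.
     is_graph_seq n E \<longrightarrow>
     (\<forall>t\<ge>1. \<forall>i<n. rat_bits (c t i) (K * log 2 n)
                 \<and> 0 < c t i * real (deg n E t i) \<and> c t i * real (deg n E t i) < 1) \<longrightarrow>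
     (\<forall>s t. 1 \<le> s \<and> s \<le> t \<longrightarrow>
        cd_rationals n (Pts n E c t s) (C * real (t - s + 1) * real n * log 2 n)
        \<and> (\<forall>i<n. \<forall>j<n. Pts n E c t s i j \<noteq> 0 \<longrightarrow>
              Pts n E c t s i j \<ge> real n powr (- C * real n ^ 2)))"
proof (intro allI impI)
  fix K :: real assume K: "K > 0"
  show "\<exists>C>0. \<exists>N0::nat. \<forall>n\<ge>N0. \<forall>E c.
     is_graph_seq n E \<longrightarrow>
     (\<forall>t\<ge>1. \<forall>i<n. rat_bits (c t i) (K * log 2 n)
                 \<and> 0 < c t i * real (deg n E t i) \<and> c t i * real (deg n E t i) < 1) \<longrightarrow>
     (\<forall>s t. 1 \<le> s \<and> s \<le> t \<longrightarrow>
        cd_rationals n (Pts n E c t s) (C * real (t - s + 1) * real n * log 2 n)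
        \<and> (\<forall>i<n. \<forall>j<n. Pts n E c t s i j \<noteq> 0 \<longrightarrow>
              Pts n E c t s i j \<ge> real n powr (- C * real n ^ 2)))"
    using K main_ctx by (intro exI[of _ "K + 1"] conjI exI[of _ "2::nat"]) auto
qed

end
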